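(* If $\mathcal{K}$ and $\mathcal{J}$ are elements of infinite order in $\mathcal{C}$ and $\Delta([\mathcal{K}],[\mathcal{J}])=0$, then there exist $a,b\in\mathbb{Z}$ such that $a\mathcal{K}=b\mathcal{J}\neq0$.
   Context: $\mathcal{C}$ is the smooth knot concordance group (knots in $S^3$ modulo smooth concordance, operation connected sum, inverse $-\mathcal{K}$ the reverse mirror image). $d(\mathcal{K},\mathcal{J})=g_4(\mathcal{K}\,\#\,-\mathcal{J})$, $g_4$ the smooth four-genus. Let $\mathcal{C}^\circ=\mathcal{C}\setminus\{0\}$; $\mathcal{K}\sim'\mathcal{J}$ if there exist $\mathcal{M}\in\mathcal{C}$ and $r,s\in\mathbb{Z}$ with $\mathcal{K}=r\mathcal{M}$, $\mathcal{J}=s\mathcal{M}$; $\sim$ is the equivalence relation generated by $\sim'$; $\mathbb{P}(\mathcal{C})=\mathcal{C}^\circ/\sim$ with classes $[\mathcal{K}]$. Define $\delta([\mathcal{K}],[\mathcal{J}])=\min\{d(\mathcal{K}',\mathcal{J}'):\mathcal{K}'\in[\mathcal{K}],\mathcal{J}'\in[\mathcal{J}]\}$ and $\Delta([\mathcal{K}],[\mathcal{J}])=\min\sum_{i=0}^{n-1}\delta([\mathcal{K}_i],[\mathcal{K}_{i+1}])$ over all finite sequences of classes with $[\mathcal{K}_0]=[\mathcal{K}]$, $[\mathcal{K}_n]=[\mathcal{J}]$. *)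

theory Defs
  imports "HOL-Algebra.Multiplicative_Group"
begin

text \<open>The concordance group is modelled abstractly as a commutative group G
(written multiplicatively: unit = 0, product = connected sum, inverse = reverse mirror)
together with the smooth four-genus g4 :: 'a => nat.\<close>

definition cdist :: "('a, 'b) monoid_scheme \<Rightarrow> ('a \<Rightarrow> nat) \<Rightarrow> 'a \<Rightarrow> 'a \<Rightarrow> nat" where
  "cdist G g4 K J = g4 (K \<otimes>\<^bsub>G\<^esub> inv\<^bsub>G\<^esub> J)"

definition nonzero :: "('a, 'b) monoid_scheme \<Rightarrow> 'a set" where
  "nonzero G = carrier G - {\<one>\<^bsub>G\<^esub>}"

definition sim1 :: "('a, 'b) monoid_scheme \<Rightarrow> 'a \<Rightarrow> 'a \<Rightarrow> bool" where
  "sim1 G K J \<longleftrightarrow> (\<exists>M\<in>carrier G. \<exists>(r::int) (s::int). K = M [^]\<^bsub>G\<^esub> r \<and> J = M [^]\<^bsub>G\<^esub> s)"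

definition simrel :: "('a, 'b) monoid_scheme \<Rightarrow> 'a \<Rightarrow> 'a \<Rightarrow> bool" where
  "simrel G = (\<lambda>K J. K \<in> nonzero G \<and> J \<in> nonzero G \<and>
      (equivclp (\<lambda>x y. x \<in> nonzero G \<and> y \<in> nonzero G \<and> sim1 G x y)) K J)"

definition pclass :: "('a, 'b) monoid_scheme \<Rightarrow> 'a \<Rightarrow> 'a set" where
  "pclass G K = {J. simrel G K J}"

definition proj_classes :: "('a, 'b) monoid_scheme \<Rightarrow> 'a set set" where
  "proj_classes G = pclass G ` nonzero G"

definition pdelta :: "('a, 'b) monoid_scheme \<Rightarrow> ('a \<Rightarrow> nat) \<Rightarrow> 'a set \<Rightarrow> 'a set \<Rightarrow> nat" where
  "pdelta G g4 A B = Inf {cdist G g4 K' J' | K' J'. K' \<in> A \<and> J' \<in> B}"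

definition pDelta :: "('a, 'b) monoid_scheme \<Rightarrow> ('a \<Rightarrow> nat) \<Rightarrow> 'a set \<Rightarrow> 'a set \<Rightarrow> nat" where
  "pDelta G g4 A B = Inf {(\<Sum>i < length xs - 1. pdelta G g4 (xs ! i) (xs ! Suc i)) | xs.
      xs \<noteq> [] \<and> hd xs = A \<and> last xs = B \<and> set xs \<subseteq> proj_classes G}"

end

theory Submission
  imports Defs
begin

lemma (in group) key_step:
  assumes M: "M \<in> carrier G" and y: "y = M [^] (r::int)" and z: "z = M [^] (s::int)"
    and y1: "y \<noteq> \<one>" and z1: "z \<noteq> \<one>" and oy: "ord y = 0"
    and K: "K \<in> carrier G" and Ka: "K [^] (a::int) = y [^] (b::int)"
  shows "ord z = 0 \<and> K [^] (a*s) = z [^] (r*b)"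
proof -
  have yc: "y \<in> carrier G" using y M by simp
  have zc: "z \<in> carrier G" using z M by simp
  have "M [^] int (ord M) = \<one>" using int_pow_eq_id[OF M] by simp
  hence "y [^] int (ord M) = \<one>"
    using y int_pow_pow[OF M] by (metis M int_pow_one mult.commute)
  hence oM: "ord M = 0" using int_pow_eq_id[OF yc] oy by simp
  have "z [^] int (ord z) = \<one>" using int_pow_eq_id[OF zc] by simp
  hence "M [^] (s * int (ord z)) = \<one>" using z int_pow_pow[OF M] by simp
  hence "s * int (ord z) = 0" using int_pow_eq_id[OF M] oM by simp
  moreover have "s \<noteq> 0" using z z1 by auto
  ultimately have oz: "ord z = 0" by simp
  have "K [^] (a*s) = (K [^] a) [^] s" using int_pow_pow[OF K] by simp
  also have "\<dots> = M [^] (r*b*s)" using Ka y int_pow_pow[OF M] by (simp add: int_pow_pow yc M)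
  also have "\<dots> = M [^] (s*(r*b))" by (simp add: ac_simps)
  also have "\<dots> = z [^] (r*b)" using z int_pow_pow[OF M] by simp
  finally show ?thesis using oz by simp
qed

lemma (in group) chain:
  assumes "equivclp (\<lambda>x y. x \<in> nonzero G \<and> y \<in> nonzero G \<and> sim1 G x y) K J"
    and K: "K \<in> carrier G" and oK: "ord K = 0"
  shows "J \<in> carrier G \<and> ord J = 0 \<and> (\<exists>a b. a \<noteq> 0 \<and> K [^] (a::int) = J [^] (b::int))"
  using assms(1)
proof (induct rule: equivclp_induct)
  case base
  then show ?case using K oK by (intro conjI exI[of _ 1]) auto
next
  case (step y z)
  then obtain a b where ab: "a \<noteq> 0" "K [^] (a::int) = y [^] (b::int)" and yc: "y \<in> carrier G"
    and oy: "ord y = 0" by blast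
  from step(2) have nz: "y \<in> nonzero G" "z \<in> nonzero G" by auto
  hence y1: "y \<noteq> \<one>" and z1: "z \<noteq> \<one>" and zc: "z \<in> carrier G" by (auto simp: nonzero_def)
  from step(2) obtain M r s where M: "M \<in> carrier G" and
     h: "(y = M [^] (r::int) \<and> z = M [^] (s::int))" using nz
    unfolding sim1_def by blast
  have r0: "r \<noteq> 0" using h y1 by auto
  have "ord z = 0 \<and> K [^] (a*s) = z [^] (r*b)"
    using key_step[OF M conjunct1[OF h] conjunct2[OF h] y1 z1 oy K ab(2)] .
  moreover have "s \<noteq> 0" using h z1 by auto
  ultimately show ?case using zc ab(1) r0 by (metis mult_eq_0_iff)
qed

lemma pclass_self: "x \<in> nonzero G \<Longrightarrow> x \<in> pclass G x"
  by (simp add: pclass_def simrel_def)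

lemma pclass_sub: "pclass G x \<subseteq> nonzero G"
  by (auto simp: pclass_def simrel_def)

lemma pclass_eq:
  assumes "x \<in> nonzero G" "y \<in> nonzero G" "w \<in> pclass G x" "w \<in> pclass G y"
  shows "pclass G x = pclass G y"
proof -
  let ?R = "\<lambda>x y. x \<in> nonzero G \<and> y \<in> nonzero G \<and> sim1 G x y"
  have xw: "equivclp ?R x w" and yw: "equivclp ?R y w" using assms(3,4)
    by (simp_all add: pclass_def simrel_def)
  have xy: "equivclp ?R x y" by (rule equivclp_trans[OF xw equivclp_sym[OF yw]])
  have yx: "equivclp ?R y x" by (rule equivclp_sym[OF xy])
  show ?thesis unfolding pclass_def simrel_def
    using assms(1,2) equivclp_trans[OF xy] equivclp_trans[OF yx] by auto
qed

lemma pdelta_zero: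
  assumes G: "group G" and g: "\<forall>x\<in>carrier G. g4 x = 0 \<longleftrightarrow> x = \<one>\<^bsub>G\<^esub>"
    and A: "A \<in> proj_classes G" and B: "B \<in> proj_classes G" and d: "pdelta G g4 A B = 0"
  shows "A = B"
proof -
  obtain x where x: "x \<in> nonzero G" "A = pclass G x"
    using A unfolding proj_classes_def by (rule imageE)
  obtain y where y: "y \<in> nonzero G" "B = pclass G y"
    using B unfolding proj_classes_def by (rule imageE)
  define S where "S = {cdist G g4 K' J' | K' J'. K' \<in> A \<and> J' \<in> B}"
  have "x \<in> A" "y \<in> B" using x y pclass_self by simp_all
  hence "cdist G g4 x y \<in> S" unfolding S_def by blast
  hence "S \<noteq> {}" by blast
  hence "Inf S \<in> S" by (rule Inf_nat_def1)
  hence "0 \<in> S" using d unfolding pdelta_def S_def by simp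
  hence "\<exists>K' J'. 0 = cdist G g4 K' J' \<and> K' \<in> A \<and> J' \<in> B"
    unfolding S_def by (simp only: mem_Collect_eq)
  then obtain K' J' where kj: "K' \<in> A" "J' \<in> B" "cdist G g4 K' J' = 0"
    by metis
  have "K' \<in> nonzero G" "J' \<in> nonzero G"
    using kj(1,2) x(2) y(2) pclass_sub[of G x] pclass_sub[of G y] by blast+
  hence Kc: "K' \<in> carrier G" "J' \<in> carrier G" by (simp_all add: nonzero_def)
  have ic: "inv\<^bsub>G\<^esub> J' \<in> carrier G" by (rule group.inv_closed[OF G Kc(2)])
  have mc: "K' \<otimes>\<^bsub>G\<^esub> inv\<^bsub>G\<^esub> J' \<in> carrier G"
    by (rule monoid.m_closed[OF group.is_monoid[OF G] Kc(1) ic])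
  have e: "K' \<otimes>\<^bsub>G\<^esub> inv\<^bsub>G\<^esub> J' = \<one>\<^bsub>G\<^esub>"
    using kj(3) g mc unfolding cdist_def by simp
  have "inv\<^bsub>G\<^esub> (inv\<^bsub>G\<^esub> J') = K'"
    by (rule group.inv_equality[OF G e ic Kc(1)])
  hence "K' = J'" using group.inv_inv[OF G Kc(2)] by simp
  thus ?thesis using pclass_eq[OF x(1) y(1)] kj x y by simp
qed

theorem theorem6p2:
  fixes G :: "('a, 'b) monoid_scheme" and g4 :: "'a \<Rightarrow> nat" and K J :: 'a
  assumes "comm_group G"
    and "\<forall>x\<in>carrier G. g4 x = 0 \<longleftrightarrow> x = \<one>\<^bsub>G\<^esub>"
    and "K \<in> carrier G" and "J \<in> carrier G"
    and "group.ord G K = 0" and "group.ord G J = 0"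
    and "pDelta G g4 (pclass G K) (pclass G J) = 0"
  shows "\<exists>(a::int) (b::int). K [^]\<^bsub>G\<^esub> a = J [^]\<^bsub>G\<^esub> b \<and> K [^]\<^bsub>G\<^esub> a \<noteq> \<one>\<^bsub>G\<^esub>"
proof -
  interpret group G using assms(1) comm_group.axioms(2) by blast
  have K1: "K \<noteq> \<one>\<^bsub>G\<^esub>" using assms(5) ord_eq_0[OF assms(3)] by force
  have J1: "J \<noteq> \<one>\<^bsub>G\<^esub>" using assms(6) ord_eq_0[OF assms(4)] by force
  have Kn: "K \<in> nonzero G" and Jn: "J \<in> nonzero G" using K1 J1 assms(3,4) by (auto simp: nonzero_def)
  have PK: "pclass G K \<in> proj_classes G" and PJ: "pclass G J \<in> proj_classes G"
    using Kn Jn by (auto simp: proj_classes_def)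
  let ?S = "{(\<Sum>i < length xs - 1. pdelta G g4 (xs ! i) (xs ! Suc i)) | xs.
      xs \<noteq> [] \<and> hd xs = pclass G K \<and> last xs = pclass G J \<and> set xs \<subseteq> proj_classes G}"
  have "(\<Sum>i < length [pclass G K, pclass G J] - 1. pdelta G g4 ([pclass G K, pclass G J] ! i) ([pclass G K, pclass G J] ! Suc i)) \<in> ?S"
    using PK PJ by (intro CollectI exI[of _ "[pclass G K, pclass G J]"]) auto
  hence "Inf ?S \<in> ?S" by (intro Inf_nat_def1) blast
  then obtain xs where xs: "xs \<noteq> []" "hd xs = pclass G K" "last xs = pclass G J" "set xs \<subseteq> proj_classes G"
    and s0: "(\<Sum>i < length xs - 1. pdelta G g4 (xs ! i) (xs ! Suc i)) = 0"
    using assms(7) unfolding pDelta_def by auto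
  have step: "xs ! i = xs ! Suc i" if "i < length xs - 1" for i
  proof -
    have "pdelta G g4 (xs ! i) (xs ! Suc i) = 0" using s0 that by simp
    moreover have "xs ! i \<in> proj_classes G" "xs ! Suc i \<in> proj_classes G"
      using that xs(4) nth_mem[of i xs] nth_mem[of "Suc i" xs] by auto
    ultimately show ?thesis using pdelta_zero[OF is_group assms(2)] by blast
  qed
  have all: "i < length xs \<Longrightarrow> xs ! i = xs ! 0" for i
  proof (induct i)
    case (Suc i) thus ?case using step[of i] by simp
  qed simp
  have "last xs = hd xs" using all[of "length xs - 1"] xs(1) by (simp add: last_conv_nth hd_conv_nth)
  hence "pclass G K = pclass G J" using xs by simp
  hence "J \<in> pclass G K" using pclass_self[OF Jn] by simp
  hence "equivclp (\<lambda>x y. x \<in> nonzero G \<and> y \<in> nonzero G \<and> sim1 G x y) K J"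
    by (simp add: pclass_def simrel_def)
  from chain[OF this assms(3,5)] obtain a b where "a \<noteq> 0" "K [^]\<^bsub>G\<^esub> (a::int) = J [^]\<^bsub>G\<^esub> (b::int)" by blast
  moreover have "K [^]\<^bsub>G\<^esub> a \<noteq> \<one>\<^bsub>G\<^esub>" using \<open>a \<noteq> 0\<close> int_pow_eq_id[OF assms(3)] assms(5) by simp
  ultimately show ?thesis by blast
qed

end
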